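(* For all integers $n\ge 1$ and $k\ge 0$, the number of Dyck $n$-paths having exactly $n-2k$ ascents of odd length equals \[\frac{1}{n+1}\binom{n+1}{2k+1}\binom{n+k}{k}.\]
   Context: A Dyck $n$-path is a path from $(0,0)$ to $(2n,0)$ with $n$ upsteps $U=(1,1)$ and $n$ downsteps $D=(1,-1)$ never going below the $x$-axis. An ascent is a maximal run of consecutive upsteps; its length is its number of upsteps. *)

theory Defs
  imports Complex_Main
begin

text \<open>A lattice path is a list of steps: True = upstep U, False = downstep D.\<close>

definition height :: "bool list \<Rightarrow> int" where
  "height w = int (count_list w True) - int (count_list w False)"

definition dyck_path :: "nat \<Rightarrow> bool list \<Rightarrow> bool" where
  "dyck_path n w \<longleftrightarrow> length w = 2 * n \<and> height w = 0 \<and>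
     (\<forall>i \<le> length w. height (take i w) \<ge> 0)"

function ascents :: "bool list \<Rightarrow> nat list" where
  "ascents [] = []"
| "ascents (False # w) = ascents w"
| "ascents (True # w) =
     (length (takeWhile id w) + 1) # ascents (dropWhile id w)"
  by pat_completeness auto
termination
  by (relation "measure length") (auto simp: le_imp_less_Suc length_dropWhile_le)

definition odd_ascents :: "bool list \<Rightarrow> nat" where
  "odd_ascents w = length (filter odd (ascents w))"

end

theory Submission
  imports Defs
begin

fun valid :: "nat \<Rightarrow> bool list \<Rightarrow> bool" where
  "valid h [] = (h = 0)"
| "valid h (True # w) = valid (Suc h) w"
| "valid h (False # w) = (h > 0 \<and> valid (h - 1) w)"

fun oa :: "nat \<Rightarrow> bool list \<Rightarrow> nat" where
  "oa s [] = (if s = 1 then 1 else 0)"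
| "oa s (True # w) = oa (if s = 1 then 2 else 1) w"
| "oa s (False # w) = (if s = 1 then 1 else 0) + oa 0 w"

lemma height_simps[simp]:
  "height [] = 0" "height (True # w) = height w + 1" "height (False # w) = height w - 1"
  by (auto simp: height_def)

lemma all_le_Suc: "(\<forall>i\<le>Suc n. Q i) \<longleftrightarrow> Q 0 \<and> (\<forall>i\<le>n. Q (Suc i))"
  by (metis Suc_le_mono le0 not0_implies_Suc)

lemma valid_iff:
  "valid h w \<longleftrightarrow> int h + height w = 0 \<and> (\<forall>i\<le>length w. int h + height (take i w) \<ge> 0)"
proof (induction w arbitrary: h)
  case Nil
  then show ?case by auto
next
  case (Cons x w)
  show ?case
  proof (cases x)
    case True
    then show ?thesis using Cons.IH[of "Suc h"]
      by (simp only: length_Cons all_le_Suc take_Suc_Cons take_0) (auto simp: algebra_simps)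
  next
    case False
    show ?thesis
    proof (cases h)
      case 0
      then show ?thesis using False
        by (simp only: length_Cons all_le_Suc take_Suc_Cons take_0) auto
    next
      case (Suc h')
      then show ?thesis using False Cons.IH[of h']
        by (simp only: length_Cons all_le_Suc take_Suc_Cons take_0) (auto simp: algebra_simps)
    qed
  qed
qed

lemma valid_len: "valid h w \<Longrightarrow> \<exists>u. length w = h + 2 * u"
proof (induction w arbitrary: h)
  case Nil
  then show ?case by auto
next
  case (Cons x w)
  show ?case
  proof (cases x)
    case True
    then obtain u where "length w = Suc h + 2 * u" using Cons.IH[of "Suc h"] Cons.prems by auto
    then show ?thesis by (intro exI[of _ "Suc u"]) simp
  next
    case False
    then obtain u where "length w = h - 1 + 2 * u" "h > 0" using Cons.IH[of "h - 1"] Cons.prems by auto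
    then show ?thesis by (intro exI[of _ u]) simp
  qed
qed

lemma dyck_iff: "dyck_path n w \<longleftrightarrow> length w = 2 * n \<and> valid 0 w"
  unfolding dyck_path_def valid_iff by auto

lemma oa_mid: "s = 1 \<or> s = 2 \<Longrightarrow>
  oa s w = (if odd (length (takeWhile id w) + s) then 1 else 0) + oa 0 (dropWhile id w)"
proof (induction w arbitrary: s)
  case Nil
  then show ?case by auto
next
  case (Cons x w)
  show ?case
  proof (cases x)
    case True
    have "oa (if s = 1 then 2 else 1) w =
      (if odd (length (takeWhile id w) + (if s = 1 then 2 else 1)) then 1 else 0) + oa 0 (dropWhile id w)"
      by (rule Cons.IH) auto
    then show ?thesis using True Cons.prems by (auto simp: id_def)
  next
    case False
    then show ?thesis using Cons.prems by auto
  qed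
qed

lemma odd_asc: "odd_ascents w = oa 0 w"
  unfolding odd_ascents_def
proof (induction w rule: ascents.induct)
  case 1
  then show ?case by simp
next
  case (2 w)
  then show ?case by simp
next
  case (3 w)
  then show ?case using oa_mid[of 1 w] by simp
qed

definition A :: "nat \<Rightarrow> nat \<Rightarrow> nat \<Rightarrow> real" where
  "A h u j = (if j \<le> u \<and> even (u - j) then real (h+1) / real (h+u+1) * real ((h+u+1) choose j)
     * real (((u - j) div 2 + h + u) choose ((u - j) div 2)) else 0)"

lemma A_u0: "A h 0 j = (if j = 0 then 1 else 0)"
  unfolding A_def by simp

lemma star_gen:
  "A H (j+2*q+2) j - (if H \<ge> 1 then A (H-1) (j+2*q+2) j else 0)
   = (if j=0 then 0 else A H (j+2*q+1) (j-1)) + A (H+2) (j+2*q) j"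
proof -
  define n where "n = H+j+2*q+2"
  define c where "c = real (n choose j)"
  define d where "d = real ((n+q) choose q)"
  have rpos: "real (H+2*q+3) > 0" by simp
  have b1: "real ((n+1) choose j) * real (H+2*q+3) = real (n+1) * c"
  proof -
    have "(n+1-j) * ((n+1) choose j) = (n+1) * (n choose j)"
      using binomial_absorb_comp[of "n+1" j] by simp
    moreover have "n+1-j = H+2*q+3" unfolding n_def by simp
    ultimately show ?thesis unfolding c_def by (metis of_nat_mult mult.commute)
  qed
  have b2: "real ((n+q+1) choose (q+1)) * real (q+1) = real (n+q+1) * d"
  proof -
    have "Suc q * (Suc (n+q) choose Suc q) = Suc (n+q) * ((n+q) choose q)"
      by (rule Suc_times_binomial)
    then show ?thesis unfolding d_def by (metis Suc_eq_plus1 add_Suc_right of_nat_mult mult.commute)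
  qed
  have b3: "real ((n+q) choose (q+1)) * real (q+1) = real n * d"
  proof -
    have "(Suc (n+q) choose Suc q) = ((n+q) choose q) + ((n+q) choose Suc q)"
      by (rule binomial_Suc_Suc)
    then have "real ((n+q+1) choose (q+1)) = d + real ((n+q) choose (q+1))"
      unfolding d_def by simp
    then show ?thesis using b2 by (simp add: algebra_simps)
  qed
  have b4: "j \<ge> 1 \<Longrightarrow> real (n choose (j-1)) * real (H+2*q+3) = real j * c"
  proof -
    assume "j \<ge> 1"
    have "j * (n choose j) = (n - j + 1) * (n choose (j - 1))"
    proof -
      obtain k where k: "j = Suc k" using \<open>j \<ge> 1\<close> by (cases j) auto
      have "Suc k * (n choose Suc k) = (n - k) * (n choose k)"
        using binomial_absorption[of k n] binomial_absorb_comp[of n k] by simp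
      moreover have "n - k = n - j + 1" using k unfolding n_def by simp
      ultimately show ?thesis using k by simp
    qed
    moreover have "n-j+1 = H+2*q+3" unfolding n_def by simp
    ultimately show ?thesis unfolding c_def by (metis of_nat_mult mult.commute)
  qed
  have t1: "A H (j+2*q+2) j = real(H+1)/real(n+1) * real ((n+1) choose j) * real ((n+q+1) choose (q+1))"
    unfolding A_def n_def by (simp add: algebra_simps)
  have t2: "(if H \<ge> 1 then A (H-1) (j+2*q+2) j else 0) = real H / real n * c * real ((n+q) choose (q+1))"
  proof (cases H)
    case 0
    then show ?thesis by simp
  next
    case (Suc H')
    then show ?thesis unfolding A_def n_def c_def by (simp add: algebra_simps del: binomial_Suc_Suc)
  qed
  have t3: "(if j=0 then 0 else A H (j+2*q+1) (j-1)) = (if j = 0 then 0 else real (H+1) / real n * real (n choose (j-1)) * real ((n+q) choose (q+1)))"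
  proof (cases j)
    case 0
    then show ?thesis by simp
  next
    case (Suc j')
    then show ?thesis unfolding A_def n_def by (simp add: algebra_simps del: binomial_Suc_Suc)
  qed
  have t4: "A (H+2) (j+2*q) j = real (H+3) / real (n+1) * real ((n+1) choose j) * d"
    unfolding A_def n_def d_def by (simp add: algebra_simps)
  define R where "R = real(H+2*q+3)"
  define Q where "Q = real(q+1)"
  define N where "N = real n"
  define N1 where "N1 = real (n+1)"
  have nz: "R \<noteq> 0" "Q \<noteq> 0" "N \<noteq> 0" "N1 \<noteq> 0"
    unfolding R_def Q_def N_def N1_def n_def by auto
  have e1: "real((n+1) choose j) = N1*c/R"
    using b1 nz unfolding R_def[symmetric] N1_def[symmetric] by (simp add: field_simps)
  have e2: "real((n+q+1) choose (q+1)) = real(n+q+1)*d/Q"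
    using b2 nz unfolding Q_def[symmetric] by (simp add: field_simps)
  have e3: "real((n+q) choose (q+1)) = N*d/Q"
    using b3 nz unfolding Q_def[symmetric] N_def[symmetric] by (simp add: field_simps)
  have t3': "(if j=0 then 0 else A H (j+2*q+1) (j-1)) = real(H+1)*real j/(R*Q)*c*d"
  proof (cases j)
    case 0
    then show ?thesis by simp
  next
    case (Suc j')
    then have e4: "real (n choose (j-1)) = real j * c / R"
      using b4 nz unfolding R_def[symmetric] by (simp add: field_simps)
    show ?thesis unfolding t3 e4 e3 using Suc nz unfolding N_def[symmetric]
      by (simp add: field_simps)
  qed
  have "A H (j+2*q+2) j = real(H+1)*real(n+q+1)/(R*Q) * c * d"
    unfolding t1 e1 e2 using nz unfolding N1_def[symmetric] by (simp add: field_simps)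
  moreover have "(if H \<ge> 1 then A (H-1) (j+2*q+2) j else 0) = real H / Q * c * d"
    unfolding t2 e3 using nz unfolding N_def[symmetric] by (simp add: field_simps)
  moreover have "A (H+2) (j+2*q) j = real(H+3)/R * c * d"
    unfolding t4 e1 using nz unfolding N1_def[symmetric] by (simp add: field_simps)
  moreover have "real(H+1)*real(n+q+1)/(R*Q) * c * d - real H / Q * c * d
     = real(H+1)*real j/(R*Q)*c*d + real(H+3)/R * c * d"
  proof -
    have "real(H+1)*real(n+q+1) - real H * R = real(H+1)*real j + real(H+3)*Q"
      unfolding R_def Q_def n_def by (simp add: algebra_simps)
    then show ?thesis using nz by (simp add: field_simps)
  qed
  ultimately show ?thesis using t3' by simp
qed

lemma absorb2: "Suc k * (n choose Suc k) = (n - k) * (n choose k)"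
  using binomial_absorption[of k n] binomial_absorb_comp[of n k] by simp

lemma star_top:
  "A H (u+2) (u+2) - (if H \<ge> 1 then A (H-1) (u+2) (u+2) else 0)
   = A H (u+1) (u+1)"
proof -
  define m where "m = H+u+2"
  define c where "c = real (m choose (u+2))"
  have b1: "real (H+1) * real ((m+1) choose (u+2)) = real (m+1) * c"
  proof -
    have "(m+1-(u+2)) * ((m+1) choose (u+2)) = (m+1) * (m choose (u+2))"
      using binomial_absorb_comp[of "m+1" "u+2"] by simp
    moreover have "m+1-(u+2) = H+1" unfolding m_def by simp
    ultimately show ?thesis unfolding c_def by (metis of_nat_mult)
  qed
  have b2: "real (H+1) * real (m choose (u+1)) = real (u+2) * c"
  proof -
    have "Suc (u+1) * (m choose Suc (u+1)) = (m - (u+1)) * (m choose (u+1))"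
      by (rule absorb2)
    moreover have "m - (u+1) = H+1" unfolding m_def by simp
    ultimately show ?thesis unfolding c_def by (metis of_nat_mult Suc_eq_plus1 add_Suc_right one_add_one)
  qed
  have nz: "real (H+1) \<noteq> 0" "real m \<noteq> 0" "real (m+1) \<noteq> 0" unfolding m_def by auto
  have t1: "A H (u+2) (u+2) = c"
  proof -
    have "A H (u+2) (u+2) = real (H+1) / real (m+1) * real ((m+1) choose (u+2))"
      unfolding A_def m_def by (simp add: algebra_simps del: binomial_Suc_Suc)
    also have "\<dots> = (real (H+1) * real ((m+1) choose (u+2))) / real (m+1)" by simp
    also have "\<dots> = c" unfolding b1 using nz by simp
    finally show ?thesis .
  qed
  have t2: "(if H \<ge> 1 then A (H-1) (u+2) (u+2) else 0) = real H / real m * c"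
  proof (cases H)
    case 0
    then show ?thesis by simp
  next
    case (Suc H')
    then show ?thesis unfolding A_def m_def c_def by (simp add: algebra_simps del: binomial_Suc_Suc)
  qed
  have t3: "A H (u+1) (u+1) = real (u+2) / real m * c"
  proof -
    have "A H (u+1) (u+1) = real (H+1) / real m * real (m choose (u+1))"
      unfolding A_def m_def by (simp add: algebra_simps del: binomial_Suc_Suc)
    also have "\<dots> = (real (H+1) * real (m choose (u+1))) / real m" by simp
    also have "\<dots> = real (u+2) / real m * c" unfolding b2 by simp
    finally show ?thesis .
  qed
  have "c - real H / real m * c = real (u+2) / real m * c"
    using nz unfolding m_def by (simp add: field_simps)
  then show ?thesis using t1 t2 t3 by simp
qed

lemma star:
  "A H (u+2) j - (if H \<ge> 1 then A (H-1) (u+2) j else 0)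
   = (if j=0 then 0 else A H (u+1) (j-1)) + A (H+2) u j"
proof -
  consider (a) "j \<le> u \<and> even (u - j)" | (b) "j = u+2" | (c) "\<not> (j \<le> u \<and> even (u - j))" "j \<noteq> u+2"
    by blast
  then show ?thesis
  proof cases
    case a
    then obtain q where q: "u = j + 2*q" by (metis evenE le_add_diff_inverse)
    show ?thesis using star_gen[of H j q] unfolding q by (simp add: add.assoc)
  next
    case b
    have z: "A (H+2) u (u+2) = 0" by (simp add: A_def)
    have e: "(if j=0 then 0 else A H (u+1) (j-1)) = A H (u+1) (u+1)" using b by simp
    show ?thesis unfolding e unfolding b using star_top[of H u] z by linarith
  next
    case c
    have n1: "\<not> (j \<le> u+2 \<and> even (u+2-j))"
    proof
      assume h: "j \<le> u+2 \<and> even (u+2-j)"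
      show False
      proof (cases "j \<le> u")
        case True
        then have "u+2-j = (u-j)+2" by simp
        then show False using h c True by simp
      next
        case False
        then have "j = u+1" using h c by simp
        then show False using h by simp
      qed
    qed
    have n2: "\<not> (j-1 \<le> u+1 \<and> even (u+1-(j-1)))" if "j \<noteq> 0"
    proof -
      have "u+1-(j-1) = u+2-j" using that by simp
      moreover have "j-1 \<le> u+1 \<longleftrightarrow> j \<le> u+2" using that by linarith
      ultimately show ?thesis using n1 by simp
    qed
    have z1: "A H' (u+2) j = 0" for H' using n1 unfolding A_def by simp
    have z2: "A H' (u+1) (j-1) = 0" if "j \<noteq> 0" for H' using n2[OF that] unfolding A_def by simp
    have z3: "A H' u j = 0" for H' using c unfolding A_def by auto
    have y1: "(if H \<ge> 1 then A (H-1) (u+2) j else 0) = 0" using z1 by simp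
    have y2: "(if j=0 then 0 else A H (u+1) (j-1)) = 0" using z2 by simp
    show ?thesis unfolding y1 y2 z1 z3 by simp
  qed
qed

lemma A_1: "A h 1 j = (if j = 1 then real (h+1) else 0)"
proof (cases "j = 1")
  case True
  have "real (h+2) \<noteq> 0" by simp
  then show ?thesis using True unfolding A_def by (simp add: field_simps)
next
  case False
  then have "\<not> (j \<le> 1 \<and> even (1 - j))" by (cases j) auto
  then show ?thesis using False unfolding A_def by simp
qed

lemma F1_base: "h \<ge> 1 \<Longrightarrow>
  A (h-1) 1 j - (if h \<ge> 2 then A (h-2) 1 j else 0) = (if j = 1 then 1 else 0)"
  unfolding A_1 by (cases "h \<ge> 2") (auto simp: of_nat_diff)


definition F1 :: "nat \<Rightarrow> nat \<Rightarrow> nat \<Rightarrow> real" where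
  "F1 h u j = A (h-1) (u+1) j - (if h \<ge> 2 then A (h-2) (u+1) j else 0)"

definition F :: "nat \<Rightarrow> nat \<Rightarrow> nat \<Rightarrow> nat \<Rightarrow> real" where
  "F s h u j = (if s = 1 then F1 h u j else A h u j)"

definition W :: "nat \<Rightarrow> nat \<Rightarrow> nat \<Rightarrow> nat \<Rightarrow> bool list set" where
  "W s h L j = {w. length w = L \<and> valid h w \<and> oa s w = j}"

lemma fin: "finite {w::bool list. length w = L \<and> P w}"
proof -
  have "finite {w::bool list. set w \<subseteq> UNIV \<and> length w = L}"
    by (rule finite_lists_length_eq) simp
  then show ?thesis by (rule finite_subset[rotated]) auto
qed

lemma W_fin: "finite (W s h L j)"
  unfolding W_def using fin by simp

lemma W_short: "L < h \<Longrightarrow> W s h L j = {}"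
  unfolding W_def using valid_len by fastforce

lemma W_Suc: "W s h (Suc L) j = Cons True ` W (if s=1 then 2 else 1) (Suc h) L j
   \<union> Cons False ` {w. length w = L \<and> 0 < h \<and> valid (h-1) w \<and> (if s=1 then 1 else 0) + oa 0 w = j}"
proof (rule set_eqI)
  fix w
  show "w \<in> W s h (Suc L) j \<longleftrightarrow> w \<in> Cons True ` W (if s=1 then 2 else 1) (Suc h) L j
   \<union> Cons False ` {w. length w = L \<and> 0 < h \<and> valid (h-1) w \<and> (if s=1 then 1 else 0) + oa 0 w = j}"
  proof (cases w)
    case Nil
    then show ?thesis unfolding W_def by auto
  next
    case (Cons x w')
    then show ?thesis unfolding W_def by (cases x) auto
  qed
qed

lemma card_W_Suc: "card (W s h (Suc L) j) = card (W (if s=1 then 2 else 1) (Suc h) L j)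
   + card {w. length w = L \<and> 0 < h \<and> valid (h-1) w \<and> (if s=1 then 1 else 0) + oa 0 w = j}"
proof -
  let ?X = "W (if s=1 then 2 else 1) (Suc h) L j"
  let ?Y = "{w. length w = L \<and> 0 < h \<and> valid (h-1) w \<and> (if s=1 then 1 else 0) + oa 0 w = j}"
  have fX: "finite ?X" by (rule W_fin)
  have fY: "finite ?Y" using fin by simp
  have "card (Cons True ` ?X \<union> Cons False ` ?Y) = card (Cons True ` ?X) + card (Cons False ` ?Y)"
    by (rule card_Un_disjoint) (use fX fY in auto)
  also have "\<dots> = card ?X + card ?Y"
    by (simp add: card_image)
  finally show ?thesis unfolding W_Suc .
qed

lemma Y_eq: "{w. length w = L \<and> 0 < h \<and> valid (h-1) w \<and> (if s=1 then 1 else 0) + oa 0 w = j}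
  = (if h = 0 then {} else if s = 1 then (if j = 0 then {} else W 0 (h-1) L (j-1)) else W 0 (h-1) L j)"
  unfolding W_def by auto

lemma count: "2*u+h = L \<Longrightarrow> (s=0 \<or> (s=1 \<and> h\<ge>1) \<or> (s=2 \<and> h\<ge>2))
  \<Longrightarrow> real (card (W s h L j)) = F s h u j"
proof (induction L arbitrary: s h u j)
  case 0
  then have hu: "h = 0" "u = 0" "s = 0" by auto
  have "W 0 0 0 j = (if j = 0 then {[]} else {})" unfolding W_def by auto
  then show ?case using hu by (simp add: F_def A_u0)
next
  case (Suc L)
  define s' where "s' = (if s=1 then 2 else (1::nat))"
  have TP: "real (card (W s' (Suc h) L j)) = (if u = 0 then 0 else F s' (h+1) (u-1) j)"
  proof (cases u)
    case 0
    then have "L < Suc h" using Suc.prems by simp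
    then show ?thesis using W_short 0 by simp
  next
    case (Suc u')
    have "real (card (W s' (Suc h) L j)) = F s' (Suc h) u' j"
      by (rule Suc.IH) (use Suc.prems Suc s'_def in auto)
    then show ?thesis using Suc by simp
  qed
  have FP: "real (card {w. length w = L \<and> 0 < h \<and> valid (h-1) w \<and> (if s=1 then 1 else 0) + oa 0 w = j})
    = (if h = 0 then 0 else if s = 1 then (if j = 0 then 0 else A (h-1) u (j-1)) else A (h-1) u j)"
  proof (cases h)
    case 0
    then show ?thesis unfolding Y_eq by simp
  next
    case (Suc h')
    have IH: "real (card (W 0 h' L j')) = A h' u j'" for j'
      using Suc.IH[of u h' 0 j'] Suc.prems Suc by (simp add: F_def)
    show ?thesis unfolding Y_eq using Suc IH by simp
  qed
  have main: "real (card (W s h (Suc L) j)) = (if u = 0 then 0 else F s' (h+1) (u-1) j) +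
     (if h = 0 then 0 else if s = 1 then (if j = 0 then 0 else A (h-1) u (j-1)) else A (h-1) u j)"
    unfolding card_W_Suc of_nat_add TP[unfolded s'_def] FP[symmetric] s'_def by simp
  consider (s0) "s = 0" | (s1) "s = 1" "h \<ge> 1" | (s2) "s = 2" "h \<ge> 2" using Suc.prems by auto
  then show ?case
  proof cases
    case s0
    show ?thesis
    proof (cases "u = 0")
      case True
      then have "h \<ge> 1" using Suc.prems by simp
      then show ?thesis using main s0 True by (simp add: F_def A_u0)
    next
      case False
      then show ?thesis using main s0 by (simp add: F_def F1_def s'_def)
    qed
  next
    case s1
    show ?thesis
    proof (cases "u = 0")
      case True
      have "F 1 h 0 j = A (h-1) 1 j - (if h \<ge> 2 then A (h-2) 1 j else 0)"
        unfolding F_def F1_def by simp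
      also have "\<dots> = (if j = 1 then 1 else 0)" by (rule F1_base[OF s1(2)])
      finally have "F 1 h 0 j = (if j = 1 then 1 else 0)" .
      then show ?thesis using main s1 True by (simp add: A_u0)
    next
      case False
      then obtain u' where u': "u = u' + 1" by (cases u) auto
      obtain H where H: "h = H + 1" using s1 by (cases h) auto
      have a1: "H+1-1 = H" "u'+1+1 = u'+2" "(H+1 \<ge> 2) = (H \<ge> 1)" "H+1-2 = H-1" by auto
      have st: "F 1 h u j = A H (u'+2) j - (if H \<ge> 1 then A (H-1) (u'+2) j else 0)"
        unfolding F_def F1_def H u' a1 by simp
      have m: "real (card (W s h (Suc L) j)) = A (H+2) u' j + (if j=0 then 0 else A H (u'+1) (j-1))"
        using main s1 u' H by (simp add: F_def s'_def)
      have "F s h u j = F 1 h u j" using s1 by simp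
      then show ?thesis using m st star[of H u' j] by linarith
    qed
  next
    case s2
    show ?thesis
    proof (cases "u = 0")
      case True
      then show ?thesis using main s2 True by (simp add: F_def A_u0)
    next
      case False
      then show ?thesis using main s2 by (simp add: F_def F1_def s'_def)
    qed
  qed
qed

theorem mainTheorem8:
  fixes n k :: nat
  assumes "n \<ge> 1"
  shows "real (card {w. dyck_path n w \<and> int (odd_ascents w) = int n - 2 * int k})
         = real ((n + 1) choose (2 * k + 1)) * real ((n + k) choose k) / real (n + 1)"
proof (cases "2 * k \<le> n")
  case False
  then have e1: "{w. dyck_path n w \<and> int (odd_ascents w) = int n - 2 * int k} = {}" by auto
  have e2: "(n + 1) choose (2 * k + 1) = 0" by (rule binomial_eq_0) (use False in simp)
  show ?thesis unfolding e1 e2 by simp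
next
  case True
  have "{w. dyck_path n w \<and> int (odd_ascents w) = int n - 2 * int k} = W 0 0 (2*n) (n - 2*k)"
    unfolding W_def dyck_iff odd_asc using True by auto
  then have "real (card {w. dyck_path n w \<and> int (odd_ascents w) = int n - 2 * int k}) = A 0 n (n - 2*k)"
    using count[of n 0 "2*n" 0 "n - 2*k"] by (simp add: F_def)
  also have "\<dots> = real ((n + 1) choose (n - 2*k)) * real ((n + k) choose k) / real (n + 1)"
  proof -
    have "n - (n - 2*k) = 2*k" using True by simp
    then show ?thesis unfolding A_def using True by (simp add: algebra_simps)
  qed
  also have "(n + 1) choose (n - 2*k) = (n + 1) choose (2 * k + 1)"
  proof -
    have "(n + 1) choose (n - 2*k) = (n+1) choose ((n+1) - (n - 2*k))"
      by (rule binomial_symmetric) (use True in simp)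
    moreover have "(n+1) - (n - 2*k) = 2*k+1" using True by simp
    ultimately show ?thesis by simp
  qed
  finally show ?thesis .
qed

end
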